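(* Let $M\ge2$ and $N\ge2$ be integers. The $N^M$ standard oracle operators $U_f$, where $f$ ranges over all functions $\mathbb{Z}_M\to\mathbb{Z}_N$, are not unambiguously distinguishable.
   Context: Let $\mathcal{H}_M,\mathcal{H}_N$ be Hilbert spaces with orthonormal computational bases $\{|x\rangle\}_{x\in\mathbb{Z}_M}$, $\{|y\rangle\}_{y\in\mathbb{Z}_N}$. For $f:\mathbb{Z}_M\to\mathbb{Z}_N$ the standard oracle operator is the unitary $U_f$ on $\mathcal{H}_M\otimes\mathcal{H}_N$ with $U_f|x\rangle\otimes|y\rangle=|x\rangle\otimes|y\oplus f(x)\rangle$, $\oplus$ being addition mod $N$. A finite list of unitary operators $W_1,\ldots,W_K$ on a finite-dimensional Hilbert space $\mathcal{H}$ is called unambiguously distinguishable if there exist a finite-dimensional ancilla space $\mathcal{H}_A$ and a unit vector $|\psi\rangle\in\mathcal{H}\otimes\mathcal{H}_A$ such that the vectors $(W_j\otimes\mathbb{1}_A)|\psi\rangle$ are linearly independent. *)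

theory Defs
  imports Complex_Main "HOL-Library.FuncSet"
begin

text \<open>A finite-dimensional Hilbert space with orthonormal basis indexed by a finite set B;
  vectors are coordinate functions B -> complex, operators are matrices B x B -> complex.
  The ancilla space has dimension d with basis indexed by {..<d}; a vector of the tensor product
  is a function psi b a.\<close>

definition tensor_id_apply :: "'b set \<Rightarrow> ('b \<Rightarrow> 'b \<Rightarrow> complex) \<Rightarrow> ('b \<Rightarrow> nat \<Rightarrow> complex) \<Rightarrow> ('b \<Rightarrow> nat \<Rightarrow> complex)" where
  "tensor_id_apply B W psi = (\<lambda>b a. \<Sum>b'\<in>B. W b b' * psi b' a)"

definition unit_vec_tensor :: "'b set \<Rightarrow> nat \<Rightarrow> ('b \<Rightarrow> nat \<Rightarrow> complex) \<Rightarrow> bool" where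
  "unit_vec_tensor B d psi \<longleftrightarrow> (\<Sum>b\<in>B. \<Sum>a<d. (cmod (psi b a))\<^sup>2) = 1"

definition lin_indep_family :: "'b set \<Rightarrow> nat \<Rightarrow> 'k set \<Rightarrow> ('k \<Rightarrow> 'b \<Rightarrow> nat \<Rightarrow> complex) \<Rightarrow> bool" where
  "lin_indep_family B d K v \<longleftrightarrow>
     (\<forall>c :: 'k \<Rightarrow> complex. (\<forall>b\<in>B. \<forall>a<d. (\<Sum>k\<in>K. c k * v k b a) = 0) \<longrightarrow> (\<forall>k\<in>K. c k = 0))"

definition unamb_distinguishable :: "'b set \<Rightarrow> 'k set \<Rightarrow> ('k \<Rightarrow> 'b \<Rightarrow> 'b \<Rightarrow> complex) \<Rightarrow> bool" where
  "unamb_distinguishable B K W \<longleftrightarrow>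
     (\<exists>(d::nat) (psi :: 'b \<Rightarrow> nat \<Rightarrow> complex).
        unit_vec_tensor B d psi \<and>
        lin_indep_family B d K (\<lambda>k. tensor_id_apply B (W k) psi))"

text \<open>Standard oracle U_f on C^M (x) C^N (basis {..<M} x {..<N}):
  U_f |x',y'> = |x', (y' + f x') mod N>, so the matrix entry at row (x,y), column (x',y')
  is 1 iff x = x' and y = (y' + f x') mod N.\<close>
definition std_oracle :: "nat \<Rightarrow> (nat \<Rightarrow> nat) \<Rightarrow> (nat \<times> nat) \<Rightarrow> (nat \<times> nat) \<Rightarrow> complex" where
  "std_oracle N f = (\<lambda>(x, y) (x', y'). if x = x' \<and> y = (y' + f x') mod N then 1 else 0)"

end

theory Submission
  imports Defs
begin

definition gg :: "nat \<Rightarrow> nat \<Rightarrow> nat \<Rightarrow> nat \<Rightarrow> nat" where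
  "gg M a b = (\<lambda>x. if x < M then (if x = 0 then a else if x = 1 then b else 0) else undefined)"

lemma gg_in: "a < N \<Longrightarrow> b < N \<Longrightarrow> gg M a b \<in> {..<M} \<rightarrow>\<^sub>E {..<N}"
  by (auto simp: gg_def PiE_def extensional_def)

lemma gg_rel: "std_oracle N (gg M 0 0) p q + std_oracle N (gg M 1 1) p q
   - std_oracle N (gg M 0 1) p q - std_oracle N (gg M 1 0) p q = 0"
  by (cases p; cases q; auto simp: std_oracle_def gg_def)

theorem theorem4:
  fixes M N :: nat
  assumes "M \<ge> 2" and "N \<ge> 2"
  shows "\<not> unamb_distinguishable ({..<M} \<times> {..<N}) ({..<M} \<rightarrow>\<^sub>E {..<N}) (std_oracle N)"
proof
  assume "unamb_distinguishable ({..<M} \<times> {..<N}) ({..<M} \<rightarrow>\<^sub>E {..<N}) (std_oracle N)"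
  then obtain d psi where li: "lin_indep_family ({..<M} \<times> {..<N}) d ({..<M} \<rightarrow>\<^sub>E {..<N})
      (\<lambda>k. tensor_id_apply ({..<M} \<times> {..<N}) (std_oracle N k) psi)"
    unfolding unamb_distinguishable_def by blast
  define K where "K = {..<M} \<rightarrow>\<^sub>E {..<N}"
  define B where "B = {..<M} \<times> {..<N}"
  define c :: "(nat \<Rightarrow> nat) \<Rightarrow> complex" where "c k =
     of_bool (k = gg M 0 0) + of_bool (k = gg M 1 1) - of_bool (k = gg M 0 1) - of_bool (k = gg M 1 0)" for k
  have in00: "gg M 0 0 \<in> K" and in11: "gg M 1 1 \<in> K" and in01: "gg M 0 1 \<in> K" and in10: "gg M 1 0 \<in> K"
    using assms by (auto simp: K_def intro!: gg_in)
  have finK: "finite K" unfolding K_def by (simp add: finite_PiE)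
  have ne1: "gg M 0 0 \<noteq> gg M 1 1" using assms
    by (auto simp: gg_def fun_eq_iff dest: spec[of _ 0])
  have ne2: "gg M 0 0 \<noteq> gg M 0 1" using assms
    by (auto simp: gg_def fun_eq_iff dest: spec[of _ 1])
  have ne3: "gg M 0 0 \<noteq> gg M 1 0" using assms
    by (auto simp: gg_def fun_eq_iff dest: spec[of _ 0])
  have c0: "c (gg M 0 0) \<noteq> 0" using ne1 ne2 ne3 by (simp add: c_def)
  have gen: "(\<Sum>k\<in>K. c k * v k) = v (gg M 0 0) + v (gg M 1 1) - v (gg M 0 1) - v (gg M 1 0)"
    for v :: "(nat \<Rightarrow> nat) \<Rightarrow> complex"
  proof -
    have d: "(\<Sum>k\<in>K. of_bool (k = g) * v k) = v g" if "g \<in> K" for g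
      using that finK by (simp add: of_bool_def sum.delta' if_distrib[where f="\<lambda>x. x * v _"] cong: if_cong)
    have "(\<Sum>k\<in>K. c k * v k) = (\<Sum>k\<in>K. of_bool (k = gg M 0 0) * v k) + (\<Sum>k\<in>K. of_bool (k = gg M 1 1) * v k)
       - (\<Sum>k\<in>K. of_bool (k = gg M 0 1) * v k) - (\<Sum>k\<in>K. of_bool (k = gg M 1 0) * v k)"
      unfolding c_def by (simp add: ring_distribs sum.distrib sum_subtractf)
    then show ?thesis using d in00 in11 in01 in10 by simp
  qed
  have "\<forall>b\<in>B. \<forall>a<d. (\<Sum>k\<in>K. c k * tensor_id_apply B (std_oracle N k) psi b a) = 0"
  proof (intro ballI allI impI)
    fix b a
    show "(\<Sum>k\<in>K. c k * tensor_id_apply B (std_oracle N k) psi b a) = 0"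
      unfolding gen tensor_id_apply_def
      by (simp add: sum_subtractf[symmetric] sum.distrib[symmetric] ring_distribs[symmetric]
          del: sum_subtractf) (rule sum.neutral, use gg_rel[of N M b, simplified] in simp)
  qed
  with li have "c (gg M 0 0) = 0" using in00
    unfolding lin_indep_family_def K_def B_def by blast
  with c0 show False by simp
qed

end
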